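(* Assume the two-system setup with a steady-state map $x_2^s$ defined on all of $\mathbb{R}^{n_1}$ and a steady state $x^s=(x_1^s,x_2^s(x_1^s))$. Assume $f_1,f_2$ are globally Lipschitz and there exist symmetric positive definite $P_1,Q_1,P_2,Q_2$ with $P_1\nabla_{x_1}f_1^r(x_1)+\nabla_{x_1}f_1^r(x_1)^TP_1\preceq -Q_1$ and $P_2\nabla_{x_2}f_2(x_1,x_2)+\nabla_{x_2}f_2(x_1,x_2)^TP_2\preceq -Q_2$ for all $x_1,x_2$. Let $\hat S_{x_1}^{x_2}:\mathbb{R}^{n_1}\times\mathbb{R}^{n_2}\to\mathbb{R}^{n_2\times n_1}$ be an approximate sensitivity such that the approximated predictive-sensitivity system $$\dot x_1=f_1(x_1,x_2),\qquad \dot x_2=f_2(x_1,x_2)+\hat S_{x_1}^{x_2}(x_1,x_2)f_1(x_1,x_2)$$ has a locally Lipschitz right-hand side, and define along solutions the error $\xi(t):=\|(S_{x_1}^{x_2}(x_1(t),x_2(t))-\hat S_{x_1}^{x_2}(x_1(t),x_2(t)))f_1(x_1(t),x_2(t))\|_2$. Then this system is input-to-state stable with respect to $\xi$: there exist a class-$\mathcal{KL}$ function $\beta$ and a class-$\mathcal{K}$ function $\gamma$ such that every solution $x(t)=(x_1(t),x_2(t))$ satisfies $\|x(t)-x^s\|_2\le \beta(\|x(t_0)-x^s\|_2,t-t_0)+\gamma\big(\sup_{t_0\le s\le t}\xi(s)\big)$ for all $t\ge t_0$ in its interval of existence.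
   Context: Two-system setup: Let $f_1:\mathbb{R}^{n_1}\times\mathbb{R}^{n_2}\to\mathbb{R}^{n_1}$ and $f_2:\mathbb{R}^{n_1}\times\mathbb{R}^{n_2}\to\mathbb{R}^{n_2}$ be continuously differentiable, and assume $\nabla_{x_2}f_2(x_1,x_2)$ is invertible for all $(x_1,x_2)$. Define the extended sensitivity $S_{x_1}^{x_2}(x_1,x_2):=-\nabla_{x_2}f_2(x_1,x_2)^{-1}\nabla_{x_1}f_2(x_1,x_2)\in\mathbb{R}^{n_2\times n_1}$. A steady-state map is a continuously differentiable map $x_2^s$ with $f_2(x_1,x_2^s(x_1))=0$ for all $x_1$ in its domain. The reduced vector field is $f_1^r(x_1):=f_1(x_1,x_2^s(x_1))$, with Jacobian $\nabla_{x_1}f_1^r(x_1)=\nabla_{x_1}f_1(x_1,x_2^s(x_1))+\nabla_{x_2}f_1(x_1,x_2^s(x_1))\nabla_{x_1}x_2^s(x_1)$. A steady state is a point $(x_1^s,x_2^s(x_1^s))$ with $f_1^r(x_1^s)=0$. Class-$\mathcal{K}$ and class-$\mathcal{KL}$ functions are the standard comparison functions of nonlinear systems theory. *)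

theory Defs
  imports "HOL-Analysis.Analysis"
begin

text \<open>States are pairs (x1, x2) with x1 in real^'n1 and x2 in real^'n2.
  The norm on the product type is the Euclidean norm of the stacked vector.\<close>

definition C1_map :: "('a::euclidean_space \<Rightarrow> 'b::euclidean_space) \<Rightarrow> bool" where
  "C1_map F \<longleftrightarrow> (\<exists>F'. (\<forall>z. (F has_derivative blinfun_apply (F' z)) (at z)) \<and> continuous_on UNIV F')"

text \<open>Partial Jacobians nabla_{x1} and nabla_{x2}.\<close>
definition jac1 :: "((real^'n1) \<times> (real^'n2) \<Rightarrow> real^'m) \<Rightarrow> (real^'n1) \<times> (real^'n2) \<Rightarrow> real^'n1^'m" where
  "jac1 f z = jacobian (\<lambda>y. f (y, snd z)) (at (fst z))"

definition jac2 :: "((real^'n1) \<times> (real^'n2) \<Rightarrow> real^'m) \<Rightarrow> (real^'n1) \<times> (real^'n2) \<Rightarrow> real^'n2^'m" where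
  "jac2 f z = jacobian (\<lambda>y. f (fst z, y)) (at (snd z))"

text \<open>Extended sensitivity S_{x1}^{x2}.\<close>
definition sens :: "((real^'n1) \<times> (real^'n2) \<Rightarrow> real^'n2) \<Rightarrow> (real^'n1) \<times> (real^'n2) \<Rightarrow> real^'n1^'n2" where
  "sens f2 z = - (matrix_inv (jac2 f2 z) ** jac1 f2 z)"

text \<open>Jacobian of the reduced vector field, as given by the chain-rule formula.\<close>
definition jac_red :: "((real^'n1) \<times> (real^'n2) \<Rightarrow> real^'n1) \<Rightarrow> (real^'n1 \<Rightarrow> real^'n2) \<Rightarrow> real^'n1 \<Rightarrow> real^'n1^'n1" where
  "jac_red f1 xs x1 = jac1 f1 (x1, xs x1) + jac2 f1 (x1, xs x1) ** jacobian xs (at x1)"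

definition sym_pos_def :: "real^'n^'n \<Rightarrow> bool" where
  "sym_pos_def P \<longleftrightarrow> transpose P = P \<and> (\<forall>v. v \<noteq> 0 \<longrightarrow> v \<bullet> (P *v v) > 0)"

text \<open>Loewner order A \<preceq> B (quadratic-form sense).\<close>
definition loewner_le :: "real^'n^'n \<Rightarrow> real^'n^'n \<Rightarrow> bool" where
  "loewner_le A B \<longleftrightarrow> (\<forall>v. v \<bullet> (A *v v) \<le> v \<bullet> (B *v v))"

definition locally_lipschitz :: "('a::metric_space \<Rightarrow> 'b::metric_space) \<Rightarrow> bool" where
  "locally_lipschitz F \<longleftrightarrow> (\<forall>z. \<exists>e>0. \<exists>L. L-lipschitz_on (cball z e) F)"

definition class_K :: "(real \<Rightarrow> real) \<Rightarrow> bool" where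
  "class_K g \<longleftrightarrow> continuous_on {0..} g \<and> g 0 = 0 \<and> strict_mono_on {0..} g"

definition class_KL :: "(real \<Rightarrow> real \<Rightarrow> real) \<Rightarrow> bool" where
  "class_KL b \<longleftrightarrow> continuous_on ({0..} \<times> {0..}) (\<lambda>(r, s). b r s)
     \<and> (\<forall>s\<ge>0. class_K (\<lambda>r. b r s))
     \<and> (\<forall>r\<ge>0. (\<forall>s1 s2. 0 \<le> s1 \<longrightarrow> s1 \<le> s2 \<longrightarrow> b r s2 \<le> b r s1)
              \<and> ((\<lambda>s. b r s) \<longlongrightarrow> 0) at_top)"

end

theory Submission
  imports Defs
begin


lemma lip_deriv_bound:
  fixes f :: "'a::real_normed_vector \<Rightarrow> 'b::real_normed_vector"
  assumes lip: "L-lipschitz_on UNIV f" and der: "(f has_derivative D) (at z)"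
  shows "norm (D h) \<le> L * norm h"
proof (cases "h = 0")
  case True
  have "linear D" using der has_derivative_linear by blast
  then show ?thesis using True by (simp add: linear_0)
next
  case False
  have bl: "bounded_linear D" using der has_derivative_bounded_linear by blast
  have hp: "norm h > 0" using False by simp
  show ?thesis
  proof (rule field_le_epsilon)
    fix e :: real assume e: "e > 0"
    define e' where "e' = e / norm h"
    have e': "e' > 0" using e hp by (simp add: e'_def)
    obtain d where d: "d > 0" and dd: "\<And>x'. 0 < norm (x' - z) \<and> norm (x' - z) < d \<Longrightarrow>
        norm (f x' - f z - D (x' - z)) / norm (x' - z) < e'"
      using der e' unfolding has_derivative_at' by blast
    define t where "t = d / (2 * norm h)"
    have tp: "t > 0" using d hp by (simp add: t_def)
    have nt: "norm ((z + t *\<^sub>R h) - z) = d / 2" using hp tp d by (simp add: t_def)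
    have "norm (f (z + t *\<^sub>R h) - f z - D (t *\<^sub>R h)) / (d/2) < e'"
      using dd[of "z + t *\<^sub>R h"] nt d by (metis add_diff_cancel_left' half_gt_zero less_add_same_cancel1 
          field_sum_of_halves)
    hence 1: "norm (f (z + t *\<^sub>R h) - f z - t *\<^sub>R D h) < e' * (d/2)"
      using d by (simp add: linear_simps(5)[OF bl] divide_less_eq)
    have 2: "norm (f (z + t *\<^sub>R h) - f z) \<le> L * (t * norm h)"
      using lipschitz_onD[OF lip, of "z + t *\<^sub>R h" z] tp by (simp add: dist_norm)
    have "t * norm (D h) = norm (t *\<^sub>R D h)" using tp by simp
    also have "\<dots> \<le> norm (f (z + t *\<^sub>R h) - f z) + norm (f (z + t *\<^sub>R h) - f z - t *\<^sub>R D h)"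
      by (metis norm_triangle_ineq4 diff_diff_eq2 diff_self diff_zero norm_minus_commute add.commute
          order_trans norm_triangle_sub)
    also have "\<dots> \<le> L * (t * norm h) + e' * (d/2)" using 1 2 by simp
    also have "e' * (d/2) = t * e" using hp by (simp add: e'_def t_def field_simps)
    finally have "t * norm (D h) \<le> t * (L * norm h + e)" by (simp add: algebra_simps)
    thus "norm (D h) \<le> L * norm h + e" using tp by simp
  qed
qed



lemma posdef_lower:
  fixes Q :: "real^'n^'n"
  assumes "sym_pos_def Q"
  shows "\<exists>q>0. \<forall>v. q * (norm v)^2 \<le> v \<bullet> (Q *v v)"
proof -
  have pd: "\<And>v. v \<noteq> 0 \<Longrightarrow> v \<bullet> (Q *v v) > 0" using assms by (simp add: sym_pos_def_def)
  have cont: "continuous_on (sphere 0 1) (\<lambda>v::real^'n. v \<bullet> (Q *v v))"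
    by (intro continuous_intros linear_continuous_on bounded_linear_ident
        matrix_vector_mul_bounded_linear)
  have ne: "sphere (0::real^'n) 1 \<noteq> {}" by simp
  obtain u where u: "u \<in> sphere 0 1" and umin: "\<And>y. y \<in> sphere 0 1 \<Longrightarrow> u \<bullet> (Q *v u) \<le> y \<bullet> (Q *v y)"
    using continuous_attains_inf[OF compact_sphere ne cont] by blast
  define q where "q = u \<bullet> (Q *v u)"
  have "u \<noteq> 0" using u by auto
  hence qp: "q > 0" using pd q_def by simp
  have "q * (norm v)^2 \<le> v \<bullet> (Q *v v)" for v
  proof (cases "v = 0")
    case True thus ?thesis by simp
  next
    case False
    define w where "w = (1 / norm v) *\<^sub>R v"
    have "w \<in> sphere 0 1" using False by (simp add: w_def)
    hence "q \<le> w \<bullet> (Q *v w)" using umin q_def by simp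
    also have "w \<bullet> (Q *v w) = (1 / norm v)^2 * (v \<bullet> (Q *v v))"
      by (simp add: w_def matrix_vector_mult_scaleR power2_eq_square)
    finally have "q \<le> (1 / norm v)^2 * (v \<bullet> (Q *v v))" .
    hence "q * (norm v)^2 \<le> (1 / norm v)^2 * (v \<bullet> (Q *v v)) * (norm v)^2"
      by (simp add: mult_right_mono)
    also have "\<dots> = v \<bullet> (Q *v v)" using False by (simp add: field_simps)
    finally show ?thesis .
  qed
  thus ?thesis using qp by blast
qed

lemma mat_bound:
  fixes A :: "real^'n^'m"
  shows "\<exists>C>0. \<forall>v. norm (A *v v) \<le> C * norm v"
  using bounded_linear.pos_bounded[OF matrix_vector_mul_bounded_linear[of A]]
  by (auto simp: mult.commute)

lemma quad_sym:
  fixes P J :: "real^'n^'n"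
  assumes "transpose P = P"
  shows "v \<bullet> ((P ** J + transpose J ** P) *v v) = 2 * ((P *v v) \<bullet> (J *v v))"
proof -
  have 1: "v \<bullet> ((P ** J) *v v) = (P *v v) \<bullet> (J *v v)"
    by (metis assms dot_lmul_matrix matrix_vector_mul_assoc vector_transpose_matrix)
  have 2: "v \<bullet> ((transpose J ** P) *v v) = (P *v v) \<bullet> (J *v v)"
    by (metis dot_lmul_matrix inner_commute matrix_vector_mul_assoc transpose_matrix_vector)
  show ?thesis using 1 2 by (simp add: matrix_vector_mult_add_rdistrib inner_add_right)
qed

lemma contr_bound:
  fixes P J Q :: "real^'n^'n"
  assumes "sym_pos_def P" and "loewner_le (P ** J + transpose J ** P) (- Q)"
    and "\<forall>v. q * (norm v)^2 \<le> v \<bullet> (Q *v v)"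
  shows "(P *v v) \<bullet> (J *v v) \<le> - (q/2) * (norm v)^2"
proof -
  have q: "q * (norm v)^2 \<le> v \<bullet> (Q *v v)" using assms(3) by blast
  have "v \<bullet> ((P ** J + transpose J ** P) *v v) \<le> v \<bullet> ((- Q) *v v)"
    using assms(2) by (simp add: loewner_le_def)
  also have "(- Q) *v v = - (Q *v v)" by (simp add: matrix_vector_mult_def vec_eq_iff sum_negf)
  finally show ?thesis using q quad_sym[where P=P and J=J and v=v] assms(1)
    by (simp add: sym_pos_def_def)
qed

lemma deriv_split:
  fixes f :: "(real^'n1) \<times> (real^'n2) \<Rightarrow> real^'m"
  assumes der: "(f has_derivative D) (at z)"
  shows "jac1 f z *v h1 = D (h1, 0)" and "jac2 f z *v h2 = D (0, h2)"
proof -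
  have i1: "((\<lambda>y. (y, snd z)) has_derivative (\<lambda>h. (h, 0))) (at (fst z))"
    by (intro derivative_eq_intros) auto
  have der': "(f has_derivative D) (at ((\<lambda>y. (y, snd z)) (fst z)))" using der by simp
  have g1: "((\<lambda>y. f (y, snd z)) has_derivative (\<lambda>h. D (h, 0))) (at (fst z))"
    using has_derivative_compose[OF i1 der'] by simp
  hence "(\<lambda>y. f (y, snd z)) differentiable (at (fst z))" unfolding differentiable_def by blast
  hence g1': "((\<lambda>y. f (y, snd z)) has_derivative (\<lambda>h. jacobian (\<lambda>y. f (y, snd z)) (at (fst z)) *v h)) (at (fst z))"
    using jacobian_works by blast
  have "(\<lambda>h. jacobian (\<lambda>y. f (y, snd z)) (at (fst z)) *v h) = (\<lambda>h. D (h, 0))"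
    using has_derivative_unique[OF g1' g1] .
  thus "jac1 f z *v h1 = D (h1, 0)" unfolding jac1_def by metis
  have i2: "((\<lambda>y. (fst z, y)) has_derivative (\<lambda>h. (0, h))) (at (snd z))"
    by (intro derivative_eq_intros) auto
  have der'': "(f has_derivative D) (at ((\<lambda>y. (fst z, y)) (snd z)))" using der by simp
  have g2: "((\<lambda>y. f (fst z, y)) has_derivative (\<lambda>h. D (0, h))) (at (snd z))"
    using has_derivative_compose[OF i2 der''] by simp
  hence "(\<lambda>y. f (fst z, y)) differentiable (at (snd z))" unfolding differentiable_def by blast
  hence g2': "((\<lambda>y. f (fst z, y)) has_derivative (\<lambda>h. jacobian (\<lambda>y. f (fst z, y)) (at (snd z)) *v h)) (at (snd z))"
    using jacobian_works by blast
  have "(\<lambda>h. jacobian (\<lambda>y. f (fst z, y)) (at (snd z)) *v h) = (\<lambda>h. D (0, h))"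
    using has_derivative_unique[OF g2' g2] .
  thus "jac2 f z *v h2 = D (0, h2)" unfolding jac2_def by metis
qed

lemma deriv_full:
  fixes f :: "(real^'n1) \<times> (real^'n2) \<Rightarrow> real^'m"
  assumes der: "(f has_derivative D) (at z)"
  shows "(f has_derivative (\<lambda>h. jac1 f z *v fst h + jac2 f z *v snd h)) (at z)"
proof -
  have lin: "linear D" using der has_derivative_linear by blast
  have "D h = jac1 f z *v fst h + jac2 f z *v snd h" for h
  proof -
    have "h = (fst h, 0) + (0, snd h)" by simp
    hence "D h = D (fst h, 0) + D (0, snd h)" by (metis lin linear_add)
    thus ?thesis using deriv_split[OF der] by simp
  qed
  hence "D = (\<lambda>h. jac1 f z *v fst h + jac2 f z *v snd h)" by auto
  thus ?thesis using der by simp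
qed

lemma C1_der: "C1_map f \<Longrightarrow> \<exists>D. (f has_derivative D) (at z)"
  unfolding C1_map_def by blast



lemma comparison:
  fixes V :: "real \<Rightarrow> real"
  assumes tT: "t0 \<le> T" and al: "0 < \<alpha>" "\<alpha> < a" and AB: "0 \<le> A" "0 \<le> B" and V0: "V t0 \<ge> 0"
    and cont: "continuous_on {t0..T} V"
    and der: "\<And>t. t0 < t \<Longrightarrow> t < T \<Longrightarrow> \<exists>V'. (V has_real_derivative V') (at t) \<and>
                   V' \<le> - a * V t + A * exp (-\<alpha> * (t - t0)) + B"
  shows "V T \<le> exp (-\<alpha> * (T - t0)) * (V t0 + A / (a - \<alpha>)) + B / a"
proof -
  have ap: "a > 0" "a - \<alpha> > 0" using al by auto
  define cA where "cA = A / (a - \<alpha>)"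
  define cB where "cB = B / a"
  define G where "G t = exp (a * (t - t0)) * V t - cA * exp ((a - \<alpha>) * (t - t0))
      - cB * exp (a * (t - t0))" for t
  have "G T \<le> G t0"
  proof (rule DERIV_nonpos_imp_decreasing_open[OF tT])
    fix t assume t: "t0 < t" "t < T"
    obtain V' where dV: "(V has_real_derivative V') (at t)" and
       V': "V' \<le> - a * V t + A * exp (-\<alpha> * (t - t0)) + B" using der[OF t] by blast
    have dG: "(G has_real_derivative
        (a * exp (a * (t - t0)) * V t + exp (a * (t - t0)) * V'
         - cA * ((a - \<alpha>) * exp ((a - \<alpha>) * (t - t0)))
         - cB * (a * exp (a * (t - t0))))) (at t)"
      unfolding G_def[abs_def]
      by (auto intro!: derivative_eq_intros dV simp: algebra_simps)
    have e: "exp ((a - \<alpha>) * (t - t0)) = exp (a * (t - t0)) * exp (-\<alpha> * (t - t0))"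
      by (simp add: exp_add[symmetric] algebra_simps)
    have "a * exp (a * (t - t0)) * V t + exp (a * (t - t0)) * V'
         - cA * ((a - \<alpha>) * exp ((a - \<alpha>) * (t - t0)))
         - cB * (a * exp (a * (t - t0)))
       = exp (a * (t - t0)) * (a * V t + V' - A * exp (-\<alpha> * (t - t0)) - B)"
      unfolding e using ap by (simp add: cA_def cB_def field_simps)
    also have "\<dots> \<le> 0" using V' by (intro mult_nonneg_nonpos) auto
    finally show "\<exists>y. (G has_real_derivative y) (at t) \<and> y \<le> 0" using dG by blast
  next
    show "continuous_on {t0..T} G" unfolding G_def
      by (intro continuous_intros cont)
  qed
  hence 1: "exp (a * (T - t0)) * V T \<le> V t0 - A / (a - \<alpha>) - B / a
       + A * exp ((a - \<alpha>) * (T - t0)) / (a - \<alpha>) + B * exp (a * (T - t0)) / a"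
    unfolding G_def cA_def cB_def by simp
  define E where "E = exp (a * (T - t0))"
  define F where "F = exp (-\<alpha> * (T - t0))"
  have Ep: "E > 0" "F > 0" by (auto simp: E_def F_def)
  have EF: "exp ((a - \<alpha>) * (T - t0)) = E * F"
    by (simp add: E_def F_def exp_add[symmetric] algebra_simps)
  have E1: "1 / E \<le> F"
  proof -
    have "1 / exp (a * (T - t0)) = exp (- (a * (T - t0)))" by (simp add: exp_minus inverse_eq_divide)
    also have "\<dots> \<le> exp (- \<alpha> * (T - t0))" using tT al by (simp add: mult_right_mono)
    finally show ?thesis by (simp add: E_def F_def)
  qed
  have "E * V T \<le> V t0 - A / (a - \<alpha>) - B / a + A * (E * F) / (a - \<alpha>) + B * E / a"
    using 1 by (simp add: E_def EF)
  hence "V T \<le> (V t0 - A / (a - \<alpha>) - B / a) / E + A * F / (a - \<alpha>) + B / a"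
    using Ep by (simp add: field_simps)
  also have "\<dots> \<le> V t0 / E + A * F / (a - \<alpha>) + B / a"
  proof -
    have "0 \<le> A / ((a - \<alpha>) * E)" "0 \<le> B / (a * E)" using ap AB Ep by auto
    thus ?thesis using ap Ep by (simp add: diff_divide_distrib)
  qed
  also have "V t0 / E \<le> F * V t0" using E1 V0
    by (metis mult.commute mult_right_mono times_divide_eq_left mult_1)
  finally show ?thesis by (simp add: F_def algebra_simps)
qed



lemma mvt_line:
  fixes f :: "'a::real_normed_vector \<Rightarrow> 'b::real_inner"
  assumes der: "\<And>z. (f has_derivative Df z) (at z)"
  shows "\<exists>\<theta>. 0 < \<theta> \<and> \<theta> < 1 \<and> p \<bullet> f b - p \<bullet> f a = p \<bullet> Df (a + \<theta> *\<^sub>R (b - a)) (b - a)"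
proof -
  define g where "g t = p \<bullet> f (a + t *\<^sub>R (b - a))" for t
  have dg: "(g has_derivative (\<lambda>s. p \<bullet> Df (a + t *\<^sub>R (b - a)) (s *\<^sub>R (b - a)))) (at t)" for t
  proof -
    have l: "((\<lambda>t. a + t *\<^sub>R (b - a)) has_derivative (\<lambda>s. s *\<^sub>R (b - a))) (at t)"
      by (auto intro!: derivative_eq_intros)
    have "((\<lambda>t. f (a + t *\<^sub>R (b - a))) has_derivative (\<lambda>s. Df (a + t *\<^sub>R (b - a)) (s *\<^sub>R (b - a)))) (at t)"
      using has_derivative_compose[OF l der] by simp
    thus ?thesis unfolding g_def by (auto intro!: derivative_eq_intros)
  qed
  have cont: "continuous_on {0..1} g"
    by (intro continuous_at_imp_continuous_on ballI has_derivative_continuous[OF dg])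
  obtain \<theta> where th: "0 < \<theta>" "\<theta> < 1" and eq: "g 1 - g 0 = p \<bullet> Df (a + \<theta> *\<^sub>R (b - a)) ((1 - 0) *\<^sub>R (b - a))"
    using mvt[of 0 1 g, OF _ cont dg] by auto
  have "g 1 = p \<bullet> f b" "g 0 = p \<bullet> f a" by (simp_all add: g_def)
  moreover have "(1 - 0) *\<^sub>R (b - a) = b - a" by simp
  ultimately have "p \<bullet> f b - p \<bullet> f a = p \<bullet> Df (a + \<theta> *\<^sub>R (b - a)) (b - a)"
    using eq by (simp only:)
  then show ?thesis by (intro exI[of _ \<theta>] conjI th)
qed

lemma young: "(q::real) > 0 \<Longrightarrow> 2 * a * b \<le> (q/2) * a^2 + (2/q) * b^2"
proof -
  assume q: "q > 0"
  have "0 \<le> (q/2) * (a - 2*b/q)^2" using q by simp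
  also have "(q/2) * (a - 2*b/q)^2 = (q/2) * a^2 + (2/q) * b^2 - 2 * a * b"
    using q by (simp add: power2_eq_square field_simps)
  finally show ?thesis by simp
qed

lemma quad_deriv:
  fixes P :: "real^'n^'n"
  assumes sym: "transpose P = P" and dw: "(w has_vector_derivative w') (at s)"
  shows "((\<lambda>s. w s \<bullet> (P *v w s)) has_real_derivative 2 * ((P *v w s) \<bullet> w')) (at s)"
proof -
  have d1: "(w has_derivative (\<lambda>h. h *\<^sub>R w')) (at s)" using dw by (simp add: has_vector_derivative_def)
  have d2: "((\<lambda>s. P *v w s) has_derivative (\<lambda>h. P *v (h *\<^sub>R w'))) (at s)"
    using bounded_linear.has_derivative[OF matrix_vector_mul_bounded_linear d1] .
  have d3: "((\<lambda>s. w s \<bullet> (P *v w s)) has_derivative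
      (\<lambda>h. w s \<bullet> (P *v (h *\<^sub>R w')) + (h *\<^sub>R w') \<bullet> (P *v w s))) (at s)"
    using has_derivative_inner[OF d1 d2] by simp
  have symm: "u \<bullet> (P *v v) = (P *v u) \<bullet> v" for u v
    by (metis dot_lmul_matrix sym vector_transpose_matrix)
  have "w s \<bullet> (P *v (h *\<^sub>R w')) + (h *\<^sub>R w') \<bullet> (P *v w s) = h * (2 * ((P *v w s) \<bullet> w'))" for h
  proof -
    have "w s \<bullet> (P *v (h *\<^sub>R w')) = (P *v w s) \<bullet> (h *\<^sub>R w')" by (rule symm)
    moreover have "(h *\<^sub>R w') \<bullet> (P *v w s) = (P *v w s) \<bullet> (h *\<^sub>R w')" by (rule inner_commute)
    ultimately show ?thesis by simp
  qed
  thus ?thesis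
    by (intro has_derivative_imp_has_field_derivative[OF d3]) simp
qed

lemma locally_lipschitz_cont:
  fixes F :: "'a::real_normed_vector \<Rightarrow> 'b::metric_space"
  assumes "locally_lipschitz F" shows "continuous (at z) F"
proof -
  obtain e L where e: "e > 0" and l: "L-lipschitz_on (cball z e) F"
    using assms unfolding locally_lipschitz_def by blast
  have "continuous_on (cball z e) F" using lipschitz_on_continuous_on[OF l] .
  hence "continuous_on (ball z e) F" using continuous_on_subset ball_subset_cball by blast
  thus ?thesis using continuous_on_eq_continuous_at[OF open_ball, of z e F] e by simp
qed



lemma jac_bound:
  fixes f :: "(real^'n1) \<times> (real^'n2) \<Rightarrow> real^'m"
  assumes lip: "L-lipschitz_on UNIV f" and der: "(f has_derivative D) (at z)"
  shows "norm (jac1 f z *v h1) \<le> L * norm h1" and "norm (jac2 f z *v h2) \<le> L * norm h2"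
proof -
  show "norm (jac1 f z *v h1) \<le> L * norm h1"
    using deriv_split(1)[OF der, of h1] lip_deriv_bound[OF lip der, of "(h1, 0)"] by (simp add: norm_Pair)
  show "norm (jac2 f z *v h2) \<le> L * norm h2"
    using deriv_split(2)[OF der, of h2] lip_deriv_bound[OF lip der, of "(0, h2)"] by (simp add: norm_Pair)
qed

lemma x2_bound:
  fixes f2 :: "(real^'n1) \<times> (real^'n2) \<Rightarrow> real^'n2" and P2 Q2 :: "real^'n2^'n2"
  assumes der: "\<And>z. \<exists>D. (f2 has_derivative D) (at z)"
    and ssm: "f2 (x1, y0) = 0"
    and P2: "sym_pos_def P2"
    and contr2: "\<forall>z. loewner_le (P2 ** jac2 f2 z + transpose (jac2 f2 z) ** P2) (- Q2)"
    and q2: "q2 > 0" "\<forall>v. q2 * (norm v)^2 \<le> v \<bullet> (Q2 *v v)"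
    and p2: "\<forall>v. norm (P2 *v v) \<le> p2 * norm v" and pp: "p2 \<ge> 0"
  shows "norm (x2 - y0) \<le> (2 * p2 / q2) * norm (f2 (x1, x2))"
proof -
  define d where "d = x2 - y0"
  define Df where "Df z = (\<lambda>h. jac1 f2 z *v fst h + jac2 f2 z *v snd h)" for z
  have der': "(f2 has_derivative Df z) (at z)" for z
    using der[of z] deriv_full unfolding Df_def by blast
  obtain \<theta> where "(P2 *v d) \<bullet> f2 (x1, x2) - (P2 *v d) \<bullet> f2 (x1, y0) =
      (P2 *v d) \<bullet> Df ((x1, y0) + \<theta> *\<^sub>R ((x1, x2) - (x1, y0))) ((x1, x2) - (x1, y0))"
    using mvt_line[OF der', of "P2 *v d" "(x1, x2)" "(x1, y0)"] by blast
  hence eq: "(P2 *v d) \<bullet> f2 (x1, x2) = (P2 *v d) \<bullet> (jac2 f2 ((x1, y0) + \<theta> *\<^sub>R ((x1, x2) - (x1, y0))) *v d)"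
    using ssm by (simp add: Df_def d_def)
  have "(P2 *v d) \<bullet> f2 (x1, x2) \<le> - (q2/2) * (norm d)^2"
    unfolding eq using contr_bound[OF P2 _ q2(2)] contr2 by blast
  hence "(q2/2) * (norm d)^2 \<le> - ((P2 *v d) \<bullet> f2 (x1, x2))" by simp
  also have "\<dots> \<le> norm (P2 *v d) * norm (f2 (x1, x2))"
    by (metis Cauchy_Schwarz_ineq2 abs_le_D2 inner_minus_left minus_minus norm_minus_cancel abs_le_D1)
  also have "\<dots> \<le> p2 * norm d * norm (f2 (x1, x2))"
    using p2 by (simp add: mult_right_mono)
  finally have 1: "(q2/2) * (norm d)^2 \<le> p2 * norm d * norm (f2 (x1, x2))" .
  show ?thesis
  proof (cases "d = 0")
    case True
    have "0 \<le> (2 * p2 / q2) * norm (f2 (x1, x2))" using pp q2 by simp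
    thus ?thesis using True by (simp add: d_def)
  next
    case False
    hence "norm d > 0" by simp
    hence "(q2/2) * norm d \<le> p2 * norm (f2 (x1, x2))" using 1
      by (simp add: power2_eq_square algebra_simps)
    thus ?thesis using q2 by (simp add: d_def field_simps)
  qed
qed

lemma inv_bound:
  fixes J P :: "real^'n^'n"
  assumes inv: "invertible J" and c: "\<forall>v. (P *v v) \<bullet> (J *v v) \<le> - (q/2) * (norm v)^2"
    and q: "q > 0" and p: "\<forall>v. norm (P *v v) \<le> p * norm v" and pp: "p \<ge> 0"
  shows "norm (matrix_inv J *v u) \<le> (2 * p / q) * norm u"
proof -
  define v where "v = matrix_inv J *v u"
  have "J ** matrix_inv J = mat 1"
    using inv unfolding invertible_def matrix_inv_def by (rule someI_ex[where P="\<lambda>A'. J ** A' = mat 1 \<and> A' ** J = mat 1", THEN conjunct1])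
  hence Jv: "J *v v = u" by (simp add: v_def matrix_vector_mul_assoc)
  have "(q/2) * (norm v)^2 \<le> - ((P *v v) \<bullet> u)" using c[rule_format, of v] Jv by simp
  also have "\<dots> \<le> norm (P *v v) * norm u"
    by (metis Cauchy_Schwarz_ineq2 abs_le_D2 inner_minus_left minus_minus norm_minus_cancel abs_le_D1)
  also have "\<dots> \<le> p * norm v * norm u" using p by (simp add: mult_right_mono)
  finally have 1: "(q/2) * (norm v)^2 \<le> p * norm v * norm u" .
  show ?thesis
  proof (cases "v = 0")
    case True thus ?thesis using pp q v_def by simp
  next
    case False
    hence "norm v > 0" by simp
    hence "(q/2) * norm v \<le> p * norm u" using 1
      by (simp add: power2_eq_square algebra_simps)
    thus ?thesis using q by (simp add: v_def field_simps)
  qed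
qed



lemma xs_lip:
  fixes f2 :: "(real^'n1) \<times> (real^'n2) \<Rightarrow> real^'n2" and P2 Q2 :: "real^'n2^'n2"
  assumes der: "\<And>z. \<exists>D. (f2 has_derivative D) (at z)"
    and ssm: "\<forall>x1. f2 (x1, xs x1) = 0"
    and P2: "sym_pos_def P2"
    and contr2: "\<forall>z. loewner_le (P2 ** jac2 f2 z + transpose (jac2 f2 z) ** P2) (- Q2)"
    and q2: "q2 > 0" "\<forall>v. q2 * (norm v)^2 \<le> v \<bullet> (Q2 *v v)"
    and p2: "\<forall>v. norm (P2 *v v) \<le> p2 * norm v" and pp: "p2 \<ge> 0"
    and lip: "L2-lipschitz_on UNIV f2"
  shows "norm (xs a - xs b) \<le> (2 * p2 / q2) * L2 * norm (a - b)"
proof -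
  have 1: "norm (xs a - xs b) \<le> (2 * p2 / q2) * norm (f2 (b, xs a))"
    by (rule x2_bound[OF der _ P2 contr2 q2 p2 pp]) (use ssm in auto)
  have "norm (f2 (b, xs a)) = dist (f2 (b, xs a)) (f2 (a, xs a))" using ssm by (simp add: dist_norm)
  also have "\<dots> \<le> L2 * dist (b, xs a) (a, xs a)" using lipschitz_onD[OF lip] by blast
  also have "dist (b, xs a) (a, xs a) = norm (a - b)" by (simp add: dist_Pair_Pair dist_norm norm_minus_commute)
  finally have 2: "norm (f2 (b, xs a)) \<le> L2 * norm (a - b)" .
  have "(2 * p2 / q2) * norm (f2 (b, xs a)) \<le> (2 * p2 / q2) * (L2 * norm (a - b))"
    using 2 pp q2 by (intro mult_left_mono) auto
  thus ?thesis using 1 by simp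
qed

lemma red_deriv:
  fixes f1 :: "(real^'n1) \<times> (real^'n2) \<Rightarrow> real^'n1"
  assumes der1: "\<And>z. \<exists>D. (f1 has_derivative D) (at z)"
    and derxs: "\<And>u. \<exists>D. (xs has_derivative D) (at u)"
  shows "((\<lambda>u. f1 (u, xs u)) has_derivative (\<lambda>h. jac_red f1 xs u *v h)) (at u)"
proof -
  have "xs differentiable (at u)" using derxs unfolding differentiable_def by blast
  hence dx: "(xs has_derivative (\<lambda>h. jacobian xs (at u) *v h)) (at u)" using jacobian_works by blast
  have dg: "((\<lambda>u. (u, xs u)) has_derivative (\<lambda>h. (h, jacobian xs (at u) *v h))) (at u)"
    by (intro has_derivative_Pair has_derivative_ident dx)
  obtain D where D: "(f1 has_derivative D) (at (u, xs u))" using der1 by blast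
  have df: "(f1 has_derivative (\<lambda>h. jac1 f1 (u, xs u) *v fst h + jac2 f1 (u, xs u) *v snd h)) (at ((\<lambda>u. (u, xs u)) u))"
    using deriv_full[OF D] by simp
  have "((\<lambda>u. f1 (u, xs u)) has_derivative
     (\<lambda>h. jac1 f1 (u, xs u) *v h + jac2 f1 (u, xs u) *v (jacobian xs (at u) *v h))) (at u)"
    using has_derivative_compose[OF dg df] by simp
  moreover have "(\<lambda>h. jac1 f1 (u, xs u) *v h + jac2 f1 (u, xs u) *v (jacobian xs (at u) *v h))
      = (\<lambda>h. jac_red f1 xs u *v h)"
    by (simp add: jac_red_def matrix_vector_mult_add_rdistrib matrix_vector_mul_assoc)
  ultimately show ?thesis by simp
qed

lemma red_contr:
  fixes f1 :: "(real^'n1) \<times> (real^'n2) \<Rightarrow> real^'n1" and P1 Q1 :: "real^'n1^'n1"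
  assumes der1: "\<And>z. \<exists>D. (f1 has_derivative D) (at z)"
    and derxs: "\<And>u. \<exists>D. (xs has_derivative D) (at u)"
    and P1: "sym_pos_def P1"
    and contr1: "\<forall>x1. loewner_le (P1 ** jac_red f1 xs x1 + transpose (jac_red f1 xs x1) ** P1) (- Q1)"
    and q1: "\<forall>v. q1 * (norm v)^2 \<le> v \<bullet> (Q1 *v v)"
  shows "(P1 *v (u - v)) \<bullet> (f1 (u, xs u) - f1 (v, xs v)) \<le> - (q1/2) * (norm (u - v))^2"
proof -
  obtain \<theta> where "(P1 *v (u - v)) \<bullet> f1 (u, xs u) - (P1 *v (u - v)) \<bullet> f1 (v, xs v) =
      (P1 *v (u - v)) \<bullet> (jac_red f1 xs (v + \<theta> *\<^sub>R (u - v)) *v (u - v))"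
    using mvt_line[where f="\<lambda>u. f1 (u, xs u)", OF red_deriv[OF der1 derxs], of "P1 *v (u - v)" u v] by blast
  moreover have "(P1 *v (u - v)) \<bullet> (jac_red f1 xs (v + \<theta> *\<^sub>R (u - v)) *v (u - v)) \<le> - (q1/2) * (norm (u - v))^2"
    using contr_bound[OF P1 _ q1] contr1 by blast
  ultimately show ?thesis by (simp add: inner_diff_right)
qed



lemma classK_lin: "(c::real) > 0 \<Longrightarrow> class_K (\<lambda>u. c * u)"
  unfolding class_K_def by (auto intro!: continuous_intros simp: strict_mono_on_def)

lemma classKL_exp:
  assumes c: "(c::real) > 0" and l: "l > 0"
  shows "class_KL (\<lambda>r s. c * r * exp (- l * s))"
proof -
  have 1: "continuous_on ({0..} \<times> {0..}) (\<lambda>(r, s). c * r * exp (- l * s))"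
    by (simp add: case_prod_beta, intro continuous_intros)
  have 2: "class_K (\<lambda>r. c * r * exp (- l * s))" for s
  proof -
    have "exp (- l * s) > 0" by simp
    thus ?thesis
      unfolding class_K_def using c by (auto intro!: continuous_intros simp: strict_mono_on_def)
  qed
  have 3: "c * r * exp (- l * s2) \<le> c * r * exp (- l * s1)" if "r \<ge> 0" "s1 \<le> s2" for r s1 s2
    using c that l by (auto intro!: mult_left_mono)
  have 4: "((\<lambda>s. c * r * exp (- l * s)) \<longlongrightarrow> 0) at_top" for r
  proof -
    have "filterlim (\<lambda>s. l * s) at_top at_top"
      using filterlim_tendsto_pos_mult_at_top[OF tendsto_const l filterlim_ident] .
    hence "filterlim (\<lambda>s. - (l * s)) at_bot at_top"
      using filterlim_uminus_at_top by blast
    hence "filterlim (\<lambda>s. - l * s) at_bot at_top" by simp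
    hence "((\<lambda>s. exp (- l * s)) \<longlongrightarrow> 0) at_top"
      using filterlim_compose[OF exp_at_bot] by blast
    thus ?thesis using tendsto_mult_right_zero by (metis (no_types) mult.assoc tendsto_mult_left_zero)
  qed
  show ?thesis unfolding class_KL_def using 1 2 3 4 by blast
qed



lemma neg_mvm: "(- A) *v v = - (A *v (v::real^'n))"
  by (simp add: matrix_vector_mult_def vec_eq_iff sum_negf)

lemma mvm_neg: "A *v (- v) = - (A *v (v::real^'n))"
  by (simp add: matrix_vector_mult_def vec_eq_iff sum_negf)

lemma inv_right: "invertible (A::real^'n^'n) \<Longrightarrow> A ** matrix_inv A = mat 1"
  unfolding invertible_def matrix_inv_def
  by (rule someI_ex[where P="\<lambda>A'. A ** A' = mat 1 \<and> A' ** A = mat 1", THEN conjunct1])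

lemma final_arith:
  fixes n r U K G \<alpha> \<tau> :: real
  assumes "0 \<le> n" "0 \<le> r" "0 \<le> U" "0 \<le> K" "0 \<le> G"
    and h: "n^2 \<le> K * exp (- \<alpha> * \<tau>) * r^2 + G * U^2"
  shows "n \<le> sqrt (K + 1) * r * exp (- (\<alpha>/2) * \<tau>) + sqrt (G + 1) * U"
proof -
  define E where "E = exp (- (\<alpha>/2) * \<tau>)"
  have E2: "E^2 = exp (- \<alpha> * \<tau>)" unfolding E_def by (simp add: exp_double[symmetric] power2_eq_square exp_add[symmetric])
  have Ep: "E > 0" unfolding E_def by simp
  have s1: "(sqrt (K+1))^2 = K + 1" "(sqrt (G+1))^2 = G + 1" using assms by auto
  have "(sqrt (K + 1) * r * E + sqrt (G + 1) * U)^2 =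
      (K+1) * E^2 * r^2 + (G+1) * U^2 + 2 * (sqrt (K + 1) * r * E) * (sqrt (G + 1) * U)"
    using s1 by (simp add: power2_eq_square algebra_simps)
  also have "\<dots> \<ge> K * E^2 * r^2 + G * U^2"
  proof -
    have "0 \<le> 2 * (sqrt (K + 1) * r * E) * (sqrt (G + 1) * U)" using assms Ep by simp
    moreover have "K * E^2 * r^2 \<le> (K+1) * E^2 * r^2" by (simp add: mult_right_mono)
    moreover have "G * U^2 \<le> (G+1) * U^2" by (simp add: mult_right_mono)
    ultimately show ?thesis by linarith
  qed
  finally have "n^2 \<le> (sqrt (K + 1) * r * E + sqrt (G + 1) * U)^2" using h E2 by (simp add: mult.commute mult.left_commute)
  moreover have "0 \<le> sqrt (K + 1) * r * E + sqrt (G + 1) * U" using assms Ep by simp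
  ultimately show ?thesis using power2_le_imp_le E_def by blast
qed



theorem proposition5:
  fixes f1 :: "(real^'n1) \<times> (real^'n2) \<Rightarrow> real^'n1"
    and f2 :: "(real^'n1) \<times> (real^'n2) \<Rightarrow> real^'n2"
    and xs :: "real^'n1 \<Rightarrow> real^'n2"
    and x1s :: "real^'n1"
    and P1 Q1 :: "real^'n1^'n1"
    and P2 Q2 :: "real^'n2^'n2"
    and Shat :: "(real^'n1) \<times> (real^'n2) \<Rightarrow> real^'n1^'n2"
  assumes C1_f1: "C1_map f1" and C1_f2: "C1_map f2"
    and inv2: "\<forall>z. invertible (jac2 f2 z)"
    and C1_xs: "C1_map xs"
    and ss_map: "\<forall>x1. f2 (x1, xs x1) = 0"
    and ss: "f1 (x1s, xs x1s) = 0"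
    and lip1: "\<exists>L. L-lipschitz_on UNIV f1"
    and lip2: "\<exists>L. L-lipschitz_on UNIV f2"
    and P1: "sym_pos_def P1" and Q1: "sym_pos_def Q1"
    and P2: "sym_pos_def P2" and Q2: "sym_pos_def Q2"
    and contr1: "\<forall>x1. loewner_le (P1 ** jac_red f1 xs x1 + transpose (jac_red f1 xs x1) ** P1) (- Q1)"
    and contr2: "\<forall>z. loewner_le (P2 ** jac2 f2 z + transpose (jac2 f2 z) ** P2) (- Q2)"
    and loclip: "locally_lipschitz (\<lambda>z. (f1 z, f2 z + Shat z *v f1 z))"
  shows "\<exists>\<beta> \<gamma>. class_KL \<beta> \<and> class_K \<gamma> \<and>
    (\<forall>(x :: real \<Rightarrow> (real^'n1) \<times> (real^'n2)) J t0.
       is_interval J \<and> t0 \<in> J \<and>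
       (\<forall>t\<in>J. (x has_vector_derivative
                  (f1 (x t), f2 (x t) + Shat (x t) *v f1 (x t))) (at t within J)) \<longrightarrow>
       (\<forall>t\<in>J. t \<ge> t0 \<longrightarrow>
          norm (x t - (x1s, xs x1s)) \<le>
            \<beta> (norm (x t0 - (x1s, xs x1s))) (t - t0)
            + \<gamma> (SUP s\<in>{t0..t}. norm ((sens f2 (x s) - Shat (x s)) *v f1 (x s)))))"
proof -
  define F where "F z = (f1 z, f2 z + Shat z *v f1 z)" for z
  obtain L1 where lip1': "L1-lipschitz_on UNIV f1" using lip1 by blast
  obtain L2 where lip2': "L2-lipschitz_on UNIV f2" using lip2 by blast
  have L1p: "L1 \<ge> 0" using lipschitz_on_nonneg[OF lip1'] .
  have L2p: "L2 \<ge> 0" using lipschitz_on_nonneg[OF lip2'] .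
  obtain q1 where q1: "q1 > 0" "\<forall>v. q1 * (norm v)^2 \<le> v \<bullet> (Q1 *v v)" using posdef_lower[OF Q1] by blast
  obtain q2 where q2: "q2 > 0" "\<forall>v. q2 * (norm v)^2 \<le> v \<bullet> (Q2 *v v)" using posdef_lower[OF Q2] by blast
  obtain m1 where m1: "m1 > 0" "\<forall>v. m1 * (norm v)^2 \<le> v \<bullet> (P1 *v v)" using posdef_lower[OF P1] by blast
  obtain m2 where m2: "m2 > 0" "\<forall>v. m2 * (norm v)^2 \<le> v \<bullet> (P2 *v v)" using posdef_lower[OF P2] by blast
  obtain p1 where p1: "p1 > 0" "\<forall>v. norm (P1 *v v) \<le> p1 * norm v" using mat_bound by blast
  obtain p2 where p2: "p2 > 0" "\<forall>v. norm (P2 *v v) \<le> p2 * norm v" using mat_bound by blast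
  have der1: "\<And>z. \<exists>D. (f1 has_derivative D) (at z)" using C1_der[OF C1_f1] by blast
  have der2: "\<And>z. \<exists>D. (f2 has_derivative D) (at z)" using C1_der[OF C1_f2] by blast
  have derxs: "\<And>z. \<exists>D. (xs has_derivative D) (at z)" using C1_der[OF C1_xs] by blast
  have symP1: "transpose P1 = P1" using P1 by (simp add: sym_pos_def_def)
  have symP2: "transpose P2 = P2" using P2 by (simp add: sym_pos_def_def)
  have cb2: "\<And>z v. (P2 *v v) \<bullet> (jac2 f2 z *v v) \<le> - (q2/2) * (norm v)^2"
    using contr_bound[OF P2 _ q2(2)] contr2 by blast
  define c2 where "c2 = 2 * p2 / q2"
  have c2p: "c2 > 0" using p2 q2 by (simp add: c2_def)
  define Lx where "Lx = c2 * L2"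
  have Lxp: "Lx \<ge> 0" using c2p L2p by (simp add: Lx_def)
  have xslip: "\<And>a b. norm (xs a - xs b) \<le> Lx * norm (a - b)"
    using xs_lip[OF der2 ss_map P2 contr2 q2 p2(2) _ lip2'] p2(1) by (simp add: Lx_def c2_def)
  have dbound: "\<And>a b. norm (b - xs a) \<le> c2 * norm (f2 (a, b))"
    using x2_bound[OF der2 _ P2 contr2 q2 p2(2)] ss_map p2(1) by (simp add: c2_def)
  define a2 where "a2 = q2 / (2 * p2)"
  define B2 where "B2 = (2 / q2) * (p2 * L2)^2"
  define \<alpha>2 where "\<alpha>2 = a2 / 2"
  define a1 where "a1 = q1 / (2 * p1)"
  define B1 where "B1 = (2 / q1) * (p1 * L1)^2"
  define \<alpha> where "\<alpha> = min \<alpha>2 (a1 / 2)"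
  have a2p0: "a2 > 0" using q2 p2 by (simp add: a2_def)
  have a2p: "a2 > 0" "\<alpha>2 > 0" "\<alpha>2 < a2" using a2p0 by (auto simp: \<alpha>2_def)
  have a1p: "a1 > 0" using q1 p1 by (auto simp: a1_def)
  have alp: "\<alpha> > 0" "\<alpha> < a1" "\<alpha> \<le> \<alpha>2" using a1p a2p by (auto simp: \<alpha>_def)
  have B12: "B1 \<ge> 0" "B2 \<ge> 0" using q1 q2 by (auto simp: B1_def B2_def)
  define k2 where "k2 = p2 * (L2 * (1 + Lx))^2"
  define kd where "kd = c2^2 * k2 / m2"
  define gd where "gd = c2^2 * B2 / (m2 * a2)"
  define K where "K = (1 + 2 * Lx^2) * (p1 + B1 * kd / (a1 - \<alpha>)) / m1 + 2 * kd"
  define G where "G = (1 + 2 * Lx^2) * (B1 * gd / a1) / m1 + 2 * gd"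
  have kp1: "k2 \<ge> 0" unfolding k2_def using p2(1) by simp
  have kp2: "kd \<ge> 0" unfolding kd_def using kp1 m2(1) by simp
  have kp3: "gd \<ge> 0" unfolding gd_def using B12(2) m2(1) a2p0 by simp
  have am: "a1 - \<alpha> > 0" using alp by simp
  have KG1: "K \<ge> 0" unfolding K_def
    by (intro add_nonneg_nonneg mult_nonneg_nonneg divide_nonneg_pos) (use p1(1) B12 kp2 am m1(1) in auto)
  have KG2: "G \<ge> 0" unfolding G_def
    by (intro add_nonneg_nonneg mult_nonneg_nonneg divide_nonneg_pos) (use B12 kp3 a1p m1(1) in auto)
  note KG = KG1 KG2
  have key: "(norm (x T - (x1s, xs x1s)))^2 \<le> K * exp (- \<alpha> * (T - t0)) * (norm (x t0 - (x1s, xs x1s)))^2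
        + G * (SUP s\<in>{t0..T}. norm ((sens f2 (x s) - Shat (x s)) *v f1 (x s)))^2
       \<and> 0 \<le> (SUP s\<in>{t0..T}. norm ((sens f2 (x s) - Shat (x s)) *v f1 (x s)))"
    if J: "is_interval J" and t0J: "t0 \<in> J"
      and dx: "\<forall>t\<in>J. (x has_vector_derivative F (x t)) (at t within J)"
      and TJ: "T \<in> J" and tT: "t0 \<le> T"
    for x :: "real \<Rightarrow> (real^'n1) \<times> (real^'n2)" and J t0 T
  proof -
    have sub: "{t0..T} \<subseteq> J"
    proof
      fix s assume "s \<in> {t0..T}"
      thus "s \<in> J" using J t0J TJ unfolding is_interval_1 atLeastAtMost_iff by blast
    qed
    have contxJ: "continuous_on J x"
      unfolding continuous_on_eq_continuous_within
    proof
      fix t assume "t \<in> J"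
      thus "continuous (at t within J) x"
        by (rule has_vector_derivative_continuous[OF dx[rule_format]])
    qed
    have contx: "continuous_on {t0..T} x" using continuous_on_subset[OF contxJ sub] .
    have dxi: "(x has_vector_derivative F (x s)) (at s)" if "t0 < s" "s < T" for s
    proof -
      have "s \<in> interior {t0..T}" using that by simp
      hence sJ: "s \<in> interior J" using interior_mono[OF sub] by blast
      hence "s \<in> J" using interior_subset by blast
      hence "(x has_vector_derivative F (x s)) (at s within J)" using dx by blast
      thus ?thesis using at_within_interior[OF sJ] by simp
    qed
    have cf1: "continuous_on UNIV f1" using lipschitz_on_continuous_on[OF lip1'] .
    have cf2: "continuous_on UNIV f2" using lipschitz_on_continuous_on[OF lip2'] .
    have cF: "continuous_on UNIV F"
    proof (intro continuous_at_imp_continuous_on ballI)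
      fix z :: "(real^'n1) \<times> (real^'n2)"
      have "F = (\<lambda>z. (f1 z, f2 z + Shat z *v f1 z))" by (simp add: F_def[abs_def])
      thus "isCont F z" using locally_lipschitz_cont[OF loclip, of z] by simp
    qed
    have cf1x: "continuous_on {t0..T} (\<lambda>s. f1 (x s))" by (rule continuous_on_compose2[OF cf1 contx]) auto
    have cf2x: "continuous_on {t0..T} (\<lambda>s. f2 (x s))" by (rule continuous_on_compose2[OF cf2 contx]) auto
    have cFx: "continuous_on {t0..T} (\<lambda>s. F (x s))" by (rule continuous_on_compose2[OF cF contx]) auto
    define \<xi> where "\<xi> s = norm ((sens f2 (x s) - Shat (x s)) *v f1 (x s))" for s
    define U where "U = (SUP s\<in>{t0..T}. \<xi> s)"
    have Sbound: "norm (sens f2 z *v v) \<le> c2 * (L2 * norm v)" for z v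
    proof -
      obtain D where D: "(f2 has_derivative D) (at z)" using der2 by blast
      have "sens f2 z *v v = - (matrix_inv (jac2 f2 z) *v (jac1 f2 z *v v))"
        by (simp add: sens_def neg_mvm matrix_vector_mul_assoc)
      hence "norm (sens f2 z *v v) = norm (matrix_inv (jac2 f2 z) *v (jac1 f2 z *v v))" by simp
      also have "\<dots> \<le> c2 * norm (jac1 f2 z *v v)"
        unfolding c2_def using inv_bound[OF inv2[rule_format] _ q2(1) p2(2)] cb2 p2(1) by simp
      also have "\<dots> \<le> c2 * (L2 * norm v)"
        using jac_bound(1)[OF lip2' D] c2p by (intro mult_left_mono) auto
      finally show ?thesis .
    qed
    define \<phi> where "\<phi> s = norm (snd (F (x s)) - f2 (x s)) + c2 * L2 * norm (f1 (x s))" for s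
    have xiphi: "\<xi> s \<le> \<phi> s" for s
    proof -
      have "(sens f2 (x s) - Shat (x s)) *v f1 (x s) = sens f2 (x s) *v f1 (x s) - Shat (x s) *v f1 (x s)"
        by (simp add: matrix_vector_mult_diff_rdistrib)
      hence "\<xi> s \<le> norm (sens f2 (x s) *v f1 (x s)) + norm (Shat (x s) *v f1 (x s))"
        unfolding \<xi>_def using norm_triangle_ineq4 by metis
      thus ?thesis using Sbound[of "x s" "f1 (x s)"] by (simp add: \<phi>_def F_def)
    qed
    have cphi: "continuous_on {t0..T} \<phi>"
      unfolding \<phi>_def by (intro continuous_intros cFx cf2x cf1x)
    have ne: "{t0..T} \<noteq> {}" using tT by simp
    obtain smax where "smax \<in> {t0..T}" and smax: "\<forall>s\<in>{t0..T}. \<phi> s \<le> \<phi> smax"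
      using continuous_attains_sup[OF compact_Icc ne cphi] by blast
    have bdd: "bdd_above (\<xi> ` {t0..T})"
    proof (rule bdd_aboveI2)
      fix s assume "s \<in> {t0..T}"
      thus "\<xi> s \<le> \<phi> smax" using xiphi[of s] smax by (meson order_trans)
    qed
    have xiU: "\<xi> s \<le> U" if "s \<in> {t0..T}" for s
      unfolding U_def using cSUP_upper[OF that bdd] .
    have U0: "0 \<le> U" using xiU[of t0] tT by (simp add: \<xi>_def) (meson norm_ge_zero order_trans)
    define w where "w s = f2 (x s)" for s
    define e where "e s = Shat (x s) *v f1 (x s) - sens f2 (x s) *v f1 (x s)" for s
    have norm_e: "norm (e s) = \<xi> s" for s
    proof -
      have "(sens f2 (x s) - Shat (x s)) *v f1 (x s) = - e s"
        by (simp add: e_def matrix_vector_mult_diff_rdistrib)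
      thus ?thesis by (simp add: \<xi>_def)
    qed
    have dw: "(w has_vector_derivative (jac2 f2 (x s) *v (w s + e s))) (at s)" if "t0 < s" "s < T" for s
    proof -
      obtain D where D: "(f2 has_derivative D) (at (x s))" using der2 by blast
      have Df: "(f2 has_derivative (\<lambda>h. jac1 f2 (x s) *v fst h + jac2 f2 (x s) *v snd h)) (at (x s))"
        using deriv_full[OF D] .
      have dxs: "(x has_derivative (\<lambda>h. h *\<^sub>R F (x s))) (at s)"
        using dxi[OF that] by (simp add: has_vector_derivative_def)
      have 1: "(w has_derivative (\<lambda>h. jac1 f2 (x s) *v fst (h *\<^sub>R F (x s)) + jac2 f2 (x s) *v snd (h *\<^sub>R F (x s)))) (at s)"
        unfolding w_def using has_derivative_compose[OF dxs Df] .
      have inv: "jac2 f2 (x s) ** matrix_inv (jac2 f2 (x s)) = mat 1" using inv_right inv2 by blast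
      have S: "jac2 f2 (x s) *v (sens f2 (x s) *v f1 (x s)) = - (jac1 f2 (x s) *v f1 (x s))"
        by (simp add: sens_def neg_mvm mvm_neg matrix_vector_mul_assoc matrix_mul_assoc inv)
      have "jac1 f2 (x s) *v fst (h *\<^sub>R F (x s)) + jac2 f2 (x s) *v snd (h *\<^sub>R F (x s))
          = h *\<^sub>R (jac2 f2 (x s) *v (w s + e s))" for h
      proof -
        have "jac2 f2 (x s) *v (w s + e s) = jac2 f2 (x s) *v f2 (x s) + jac2 f2 (x s) *v (Shat (x s) *v f1 (x s))
              - jac2 f2 (x s) *v (sens f2 (x s) *v f1 (x s))"
          by (simp add: w_def e_def matrix_vector_right_distrib matrix_vector_mult_diff_distrib)
        also have "\<dots> = jac1 f2 (x s) *v f1 (x s) + jac2 f2 (x s) *v (f2 (x s) + Shat (x s) *v f1 (x s))"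
          by (simp add: S matrix_vector_right_distrib)
        finally have eqJ: "jac2 f2 (x s) *v (w s + e s) = jac1 f2 (x s) *v f1 (x s) + jac2 f2 (x s) *v (f2 (x s) + Shat (x s) *v f1 (x s))" .
        show ?thesis unfolding eqJ
          by (simp add: F_def matrix_vector_mult_scaleR scaleR_right_distrib algebra_simps)
      qed
      thus ?thesis using 1 by (simp add: has_vector_derivative_def)
    qed
    define V2 where "V2 s = w s \<bullet> (P2 *v w s)" for s
    have cw: "continuous_on {t0..T} w" unfolding w_def using cf2x .
    have cV2: "continuous_on {t0..T} V2" unfolding V2_def
      by (intro continuous_intros cw linear_continuous_on[OF matrix_vector_mul_bounded_linear]
          continuous_on_compose2[OF linear_continuous_on[OF matrix_vector_mul_bounded_linear[of P2]] cw]) auto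
    have V2up: "V2 s \<le> p2 * (norm (w s))^2" for s
    proof -
      have "V2 s \<le> norm (w s) * norm (P2 *v w s)" unfolding V2_def by (rule norm_cauchy_schwarz)
      also have "\<dots> \<le> norm (w s) * (p2 * norm (w s))" using p2(2) by (intro mult_left_mono) auto
      finally show ?thesis by (simp add: power2_eq_square algebra_simps)
    qed
    have V2lo: "m2 * (norm (w s))^2 \<le> V2 s" for s unfolding V2_def using m2(2) by blast
    have dV2: "\<exists>V'. (V2 has_real_derivative V') (at s) \<and> V' \<le> - a2 * V2 s + 0 * exp (- \<alpha>2 * (s - t0)) + B2 * U^2"
      if "t0 < s" "s < T" for s
    proof -
      let ?J = "jac2 f2 (x s)"
      have d: "(V2 has_real_derivative 2 * ((P2 *v w s) \<bullet> (?J *v (w s + e s)))) (at s)"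
        unfolding V2_def[abs_def] by (rule quad_deriv[OF symP2 dw[OF that]])
      have sT: "s \<in> {t0..T}" using that by auto
      have "(P2 *v w s) \<bullet> (?J *v (w s + e s)) = (P2 *v w s) \<bullet> (?J *v w s) + (P2 *v w s) \<bullet> (?J *v e s)"
        by (simp add: matrix_vector_right_distrib inner_add_right)
      also have "(P2 *v w s) \<bullet> (?J *v e s) \<le> (p2 * L2 * U) * norm (w s)"
      proof -
        obtain D where D: "(f2 has_derivative D) (at (x s))" using der2 by blast
        have "(P2 *v w s) \<bullet> (?J *v e s) \<le> norm (P2 *v w s) * norm (?J *v e s)" by (rule norm_cauchy_schwarz)
        also have "\<dots> \<le> (p2 * norm (w s)) * (L2 * norm (e s))"
          using p2 jac_bound(2)[OF lip2' D, of "e s"] by (intro mult_mono) auto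
        also have "\<dots> \<le> (p2 * norm (w s)) * (L2 * U)"
          using norm_e[of s] xiU[OF sT] p2(1) L2p by (intro mult_left_mono) auto
        finally show ?thesis by (simp add: algebra_simps)
      qed
      finally have "2 * ((P2 *v w s) \<bullet> (?J *v (w s + e s))) \<le>
          2 * ((P2 *v w s) \<bullet> (?J *v w s)) + 2 * (p2 * L2 * U) * norm (w s)" by simp
      also have "\<dots> \<le> - q2 * (norm (w s))^2 + 2 * norm (w s) * (p2 * L2 * U)"
        using cb2[of "w s" "x s"] by simp
      also have "\<dots> \<le> - q2 * (norm (w s))^2 + ((q2/2) * (norm (w s))^2 + (2/q2) * (p2 * L2 * U)^2)"
        using young[OF q2(1), of "norm (w s)" "p2 * L2 * U"] by simp
      also have "\<dots> = - (q2/2) * (norm (w s))^2 + B2 * U^2"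
        by (simp add: B2_def power_mult_distrib algebra_simps)
      also have "- (q2/2) * (norm (w s))^2 \<le> - a2 * V2 s"
      proof -
        have "a2 * V2 s \<le> a2 * (p2 * (norm (w s))^2)" using V2up a2p0 by (intro mult_left_mono) auto
        also have "\<dots> = (q2/2) * (norm (w s))^2" using p2(1) by (simp add: a2_def)
        finally show ?thesis by simp
      qed
      finally show ?thesis using d by auto
    qed
    have V2bound: "V2 \<sigma> \<le> exp (- \<alpha>2 * (\<sigma> - t0)) * V2 t0 + B2 * U^2 / a2" if "\<sigma> \<in> {t0..T}" for \<sigma>
    proof -
      have "V2 \<sigma> \<le> exp (- \<alpha>2 * (\<sigma> - t0)) * (V2 t0 + 0 / (a2 - \<alpha>2)) + B2 * U^2 / a2"
      proof (rule comparison[where a=a2 and A=0])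
        show "t0 \<le> \<sigma>" "0 < \<alpha>2" "\<alpha>2 < a2" "(0::real) \<le> 0" "0 \<le> B2 * U^2" using that a2p B12 by auto
        show "V2 t0 \<ge> 0" using V2lo[of t0] m2(1) by (meson mult_nonneg_nonneg order_trans zero_le_power2 less_imp_le)
        show "continuous_on {t0..\<sigma>} V2" using continuous_on_subset[OF cV2] that by auto
        fix s assume "t0 < s" "s < \<sigma>"
        thus "\<exists>V'. (V2 has_real_derivative V') (at s) \<and> V' \<le> - a2 * V2 s + 0 * exp (- \<alpha>2 * (s - t0)) + B2 * U^2"
          using dV2 that by auto
      qed
      thus ?thesis by simp
    qed
    define y where "y s = fst (x s) - x1s" for s
    define d where "d s = snd (x s) - xs (fst (x s))" for s
    define r where "r = norm (x t0 - (x1s, xs x1s))"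
    have r0: "r \<ge> 0" by (simp add: r_def)
    have xpair: "x s = (fst (x s), snd (x s))" for s by simp
    have dPair: "dist (a, b) (a, c) = norm (b - c)" for a :: "real^'n1" and b c :: "real^'n2"
      by (simp add: dist_Pair_Pair dist_norm)
    have xd: "x t0 - (x1s, xs x1s) = (fst (x t0) - x1s, snd (x t0) - xs x1s)" by (cases "x t0") simp
    have y0r: "norm (y t0) \<le> r"
      unfolding r_def y_def xd by (rule norm_fst_le)
    have z0r: "norm (snd (x t0) - xs x1s) \<le> r"
      unfolding r_def xd by (rule norm_snd_le)
    have dwb: "norm (d s) \<le> c2 * norm (w s)" for s
      using dbound[of "snd (x s)" "fst (x s)"] by (simp add: d_def w_def)
    have d0: "norm (d t0) \<le> (1 + Lx) * r"
    proof -
      have "d t0 = (snd (x t0) - xs x1s) + (xs x1s - xs (fst (x t0)))" by (simp add: d_def)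
      hence "norm (d t0) \<le> norm (snd (x t0) - xs x1s) + norm (xs x1s - xs (fst (x t0)))"
        by (metis norm_triangle_ineq)
      also have "norm (xs x1s - xs (fst (x t0))) \<le> Lx * norm (x1s - fst (x t0))" by (rule xslip)
      also have "norm (x1s - fst (x t0)) = norm (y t0)" by (simp add: y_def norm_minus_commute)
      finally have "norm (d t0) \<le> norm (snd (x t0) - xs x1s) + Lx * norm (y t0)" by simp
      also have "\<dots> \<le> r + Lx * r" using z0r y0r Lxp by (intro add_mono mult_left_mono) auto
      finally show ?thesis by (simp add: algebra_simps)
    qed
    have w0: "norm (w t0) \<le> L2 * norm (d t0)"
    proof -
      have "norm (w t0) = dist (f2 (fst (x t0), snd (x t0))) (f2 (fst (x t0), xs (fst (x t0))))"
        using ss_map by (simp add: w_def dist_norm)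
      also have "\<dots> \<le> L2 * dist (fst (x t0), snd (x t0)) (fst (x t0), xs (fst (x t0)))"
        using lipschitz_onD[OF lip2'] by blast
      also have "dist (fst (x t0), snd (x t0)) (fst (x t0), xs (fst (x t0))) = norm (d t0)"
        unfolding dPair by (simp add: d_def)
      finally show ?thesis .
    qed
    have V2t0: "V2 t0 \<le> k2 * r^2"
    proof -
      have "norm (w t0) \<le> L2 * (1 + Lx) * r" using w0 d0 L2p by (metis mult.assoc mult_left_mono order_trans)
      hence "(norm (w t0))^2 \<le> (L2 * (1 + Lx) * r)^2" by (intro power_mono) auto
      hence "p2 * (norm (w t0))^2 \<le> p2 * (L2 * (1 + Lx) * r)^2" using p2(1) by (intro mult_left_mono) auto
      moreover have "p2 * (L2 * (1 + Lx) * r)^2 = k2 * r^2" by (simp add: k2_def power_mult_distrib)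
      ultimately show ?thesis using V2up[of t0] by linarith
    qed
    have d2: "(norm (d s))^2 \<le> exp (- \<alpha> * (s - t0)) * (kd * r^2) + gd * U^2" if sT: "s \<in> {t0..T}" for s
    proof -
      have "(norm (d s))^2 \<le> (c2 * norm (w s))^2" using dwb[of s] by (intro power_mono) auto
      also have "\<dots> = c2^2 * (norm (w s))^2" by (simp add: power_mult_distrib)
      also have "(norm (w s))^2 \<le> V2 s / m2" using V2lo[of s] m2(1) by (simp add: pos_le_divide_eq mult.commute)
      hence "c2^2 * (norm (w s))^2 \<le> c2^2 * (V2 s / m2)" by (intro mult_left_mono) auto
      also have "V2 s \<le> exp (- \<alpha> * (s - t0)) * (k2 * r^2) + B2 * U^2 / a2"
      proof -
        have e: "exp (- \<alpha>2 * (s - t0)) \<le> exp (- \<alpha> * (s - t0))" using alp sT by (simp add: mult_right_mono)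
        have "V2 s \<le> exp (- \<alpha>2 * (s - t0)) * V2 t0 + B2 * U^2 / a2" using V2bound[OF sT] .
        also have "exp (- \<alpha>2 * (s - t0)) * V2 t0 \<le> exp (- \<alpha> * (s - t0)) * (k2 * r^2)"
          using e V2t0 V2lo[of t0] m2(1) by (intro mult_mono) (auto intro: order_trans[OF _ V2lo[of t0]])
        finally show ?thesis by simp
      qed
      hence "c2^2 * (V2 s / m2) \<le> c2^2 * ((exp (- \<alpha> * (s - t0)) * (k2 * r^2) + B2 * U^2 / a2) / m2)"
        using m2(1) by (intro mult_left_mono divide_right_mono) auto
      also have "\<dots> = exp (- \<alpha> * (s - t0)) * (kd * r^2) + gd * U^2"
        using m2(1) a2p0 by (simp add: kd_def gd_def field_simps)
      finally show ?thesis .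
    qed
    define V1 where "V1 s = y s \<bullet> (P1 *v y s)" for s
    have cy: "continuous_on {t0..T} y" unfolding y_def by (intro continuous_intros contx)
    have cV1: "continuous_on {t0..T} V1" unfolding V1_def
      by (intro continuous_intros cy
          continuous_on_compose2[OF linear_continuous_on[OF matrix_vector_mul_bounded_linear[of P1]] cy]) auto
    have V1up: "V1 s \<le> p1 * (norm (y s))^2" for s
    proof -
      have "V1 s \<le> norm (y s) * norm (P1 *v y s)" unfolding V1_def by (rule norm_cauchy_schwarz)
      also have "\<dots> \<le> norm (y s) * (p1 * norm (y s))" using p1(2) by (intro mult_left_mono) auto
      finally show ?thesis by (simp add: power2_eq_square algebra_simps)
    qed
    have V1lo: "m1 * (norm (y s))^2 \<le> V1 s" for s unfolding V1_def using m1(2) by blast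
    have dy: "(y has_vector_derivative f1 (x s)) (at s)" if "t0 < s" "s < T" for s
    proof -
      have dxs: "(x has_derivative (\<lambda>h. h *\<^sub>R F (x s))) (at s)"
        using dxi[OF that] by (simp add: has_vector_derivative_def)
      have "(y has_derivative (\<lambda>h. fst (h *\<^sub>R F (x s)) - 0)) (at s)"
        unfolding y_def[abs_def] by (intro derivative_intros dxs)
      thus ?thesis by (simp add: has_vector_derivative_def F_def)
    qed
    have dV1: "\<exists>V'. (V1 has_real_derivative V') (at s) \<and>
        V' \<le> - a1 * V1 s + (B1 * (kd * r^2)) * exp (- \<alpha> * (s - t0)) + B1 * gd * U^2"
      if "t0 < s" "s < T" for s
    proof -
      have sT: "s \<in> {t0..T}" using that by auto
      have d: "(V1 has_real_derivative 2 * ((P1 *v y s) \<bullet> f1 (x s))) (at s)"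
        unfolding V1_def[abs_def] by (rule quad_deriv[OF symP1 dy[OF that]])
      have split: "f1 (x s) = (f1 (fst (x s), xs (fst (x s))) - f1 (x1s, xs x1s))
          + (f1 (fst (x s), snd (x s)) - f1 (fst (x s), xs (fst (x s))))" using ss by simp
      have c1: "(P1 *v y s) \<bullet> (f1 (fst (x s), xs (fst (x s))) - f1 (x1s, xs x1s)) \<le> - (q1/2) * (norm (y s))^2"
        unfolding y_def by (rule red_contr[OF der1 derxs P1 contr1 q1(2)])
      have "(P1 *v y s) \<bullet> (f1 (fst (x s), snd (x s)) - f1 (fst (x s), xs (fst (x s))))
          \<le> norm (P1 *v y s) * norm (f1 (fst (x s), snd (x s)) - f1 (fst (x s), xs (fst (x s))))"
        by (rule norm_cauchy_schwarz)
      also have "\<dots> \<le> (p1 * norm (y s)) * (L1 * norm (d s))"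
      proof (intro mult_mono)
        show "norm (P1 *v y s) \<le> p1 * norm (y s)" using p1(2) by blast
        have "norm (f1 (fst (x s), snd (x s)) - f1 (fst (x s), xs (fst (x s))))
            = dist (f1 (fst (x s), snd (x s))) (f1 (fst (x s), xs (fst (x s))))" by (simp add: dist_norm)
        also have "\<dots> \<le> L1 * dist (fst (x s), snd (x s)) (fst (x s), xs (fst (x s)))"
          using lipschitz_onD[OF lip1'] by blast
        also have "dist (fst (x s), snd (x s)) (fst (x s), xs (fst (x s))) = norm (d s)"
          unfolding dPair by (simp add: d_def)
        finally show "norm (f1 (fst (x s), snd (x s)) - f1 (fst (x s), xs (fst (x s)))) \<le> L1 * norm (d s)" .
      qed (use p1(1) in auto)
      finally have c2': "(P1 *v y s) \<bullet> (f1 (fst (x s), snd (x s)) - f1 (fst (x s), xs (fst (x s))))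
          \<le> norm (y s) * (p1 * L1 * norm (d s))" by (simp add: algebra_simps)
      have "2 * ((P1 *v y s) \<bullet> f1 (x s)) \<le> - q1 * (norm (y s))^2 + 2 * norm (y s) * (p1 * L1 * norm (d s))"
      proof -
        have "(P1 *v y s) \<bullet> f1 (x s) = (P1 *v y s) \<bullet> (f1 (fst (x s), xs (fst (x s))) - f1 (x1s, xs x1s))
          + (P1 *v y s) \<bullet> (f1 (fst (x s), snd (x s)) - f1 (fst (x s), xs (fst (x s))))"
          by (subst split) (simp only: inner_add_right)
        thus ?thesis using c1 c2' by linarith
      qed
      also have "\<dots> \<le> - q1 * (norm (y s))^2 + ((q1/2) * (norm (y s))^2 + (2/q1) * (p1 * L1 * norm (d s))^2)"
        using young[OF q1(1), of "norm (y s)" "p1 * L1 * norm (d s)"] by simp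
      also have "\<dots> = - (q1/2) * (norm (y s))^2 + B1 * (norm (d s))^2"
        by (simp add: B1_def power_mult_distrib algebra_simps)
      also have "- (q1/2) * (norm (y s))^2 \<le> - a1 * V1 s"
      proof -
        have "a1 * V1 s \<le> a1 * (p1 * (norm (y s))^2)" using V1up a1p by (intro mult_left_mono) auto
        also have "\<dots> = (q1/2) * (norm (y s))^2" using p1(1) by (simp add: a1_def)
        finally show ?thesis by simp
      qed
      also have "B1 * (norm (d s))^2 \<le> B1 * (exp (- \<alpha> * (s - t0)) * (kd * r^2) + gd * U^2)"
        using d2[OF sT] B12 by (intro mult_left_mono) auto
      finally show ?thesis using d by (auto simp: algebra_simps)
    qed
    have V1T: "V1 T \<le> exp (- \<alpha> * (T - t0)) * (V1 t0 + B1 * (kd * r^2) / (a1 - \<alpha>)) + B1 * gd * U^2 / a1"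
    proof (rule comparison[where a=a1])
      show "t0 \<le> T" "0 < \<alpha>" "\<alpha> < a1" "0 \<le> B1 * (kd * r^2)" "0 \<le> B1 * gd * U^2"
        using tT alp B12 kp2 kp3 by auto
      show "V1 t0 \<ge> 0" using V1lo[of t0] m1(1) by (meson mult_nonneg_nonneg order_trans zero_le_power2 less_imp_le)
      show "continuous_on {t0..T} V1" by (rule cV1)
      fix s assume "t0 < s" "s < T"
      thus "\<exists>V'. (V1 has_real_derivative V') (at s) \<and>
          V' \<le> - a1 * V1 s + B1 * (kd * r^2) * exp (- \<alpha> * (s - t0)) + B1 * gd * U^2"
        using dV1 by auto
    qed
    have V1t0: "V1 t0 \<le> p1 * r^2"
    proof -
      have "(norm (y t0))^2 \<le> r^2" using y0r by (intro power_mono) auto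
      thus ?thesis using V1up[of t0] p1(1) by (meson mult_left_mono order_trans less_imp_le)
    qed
    define E where "E = exp (- \<alpha> * (T - t0))"
    have Ep: "E > 0" by (simp add: E_def)
    have yT: "(norm (y T))^2 \<le> (E * (p1 * r^2 + B1 * (kd * r^2) / (a1 - \<alpha>)) + B1 * gd * U^2 / a1) / m1"
    proof -
      have "m1 * (norm (y T))^2 \<le> E * (V1 t0 + B1 * (kd * r^2) / (a1 - \<alpha>)) + B1 * gd * U^2 / a1"
        using V1lo[of T] V1T by (simp add: E_def)
      also have "\<dots> \<le> E * (p1 * r^2 + B1 * (kd * r^2) / (a1 - \<alpha>)) + B1 * gd * U^2 / a1"
        using V1t0 Ep by (intro add_mono mult_left_mono) auto
      finally show ?thesis using m1(1) by (simp add: pos_le_divide_eq mult.commute)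
    qed
    have dT: "(norm (d T))^2 \<le> E * (kd * r^2) + gd * U^2" using d2[of T] tT by (simp add: E_def)
    have nT: "(norm (x T - (x1s, xs x1s)))^2 \<le> (1 + 2 * Lx^2) * (norm (y T))^2 + 2 * (norm (d T))^2"
    proof -
      have xT: "x T - (x1s, xs x1s) = (y T, snd (x T) - xs x1s)" by (cases "x T") (simp add: y_def)
      have z: "snd (x T) - xs x1s = d T + (xs (fst (x T)) - xs x1s)" by (simp add: d_def)
      have "norm (snd (x T) - xs x1s) \<le> norm (d T) + norm (xs (fst (x T)) - xs x1s)"
        unfolding z by (rule norm_triangle_ineq)
      also have "norm (xs (fst (x T)) - xs x1s) \<le> Lx * norm (y T)" using xslip by (simp add: y_def)
      finally have zb: "norm (snd (x T) - xs x1s) \<le> norm (d T) + Lx * norm (y T)" by simp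
      have "(norm (snd (x T) - xs x1s))^2 \<le> (norm (d T) + Lx * norm (y T))^2"
        using zb by (intro power_mono) auto
      also have "\<dots> \<le> 2 * (norm (d T))^2 + 2 * Lx^2 * (norm (y T))^2"
        using young[of 2 "norm (d T)" "Lx * norm (y T)"]
        by (simp add: power2_eq_square algebra_simps)
      finally have zz: "(norm (snd (x T) - xs x1s))^2 \<le> 2 * (norm (d T))^2 + 2 * Lx^2 * (norm (y T))^2" .
      have "(norm (x T - (x1s, xs x1s)))^2 = (norm (y T))^2 + (norm (snd (x T) - xs x1s))^2"
        unfolding xT by (simp add: norm_Pair)
      with zz show ?thesis by (simp add: algebra_simps)
    qed
    have Ueq: "(SUP s\<in>{t0..T}. norm ((sens f2 (x s) - Shat (x s)) *v f1 (x s))) = U"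
      unfolding U_def \<xi>_def ..
    have "(norm (x T - (x1s, xs x1s)))^2 \<le>
        (1 + 2 * Lx^2) * ((E * (p1 * r^2 + B1 * (kd * r^2) / (a1 - \<alpha>)) + B1 * gd * U^2 / a1) / m1)
        + 2 * (E * (kd * r^2) + gd * U^2)"
    proof -
      have "(1 + 2 * Lx^2) * (norm (y T))^2 \<le>
          (1 + 2 * Lx^2) * ((E * (p1 * r^2 + B1 * (kd * r^2) / (a1 - \<alpha>)) + B1 * gd * U^2 / a1) / m1)"
        by (rule mult_left_mono[OF yT]) simp
      moreover have "2 * (norm (d T))^2 \<le> 2 * (E * (kd * r^2) + gd * U^2)" using dT by simp
      ultimately show ?thesis using nT by linarith
    qed
    also have "\<dots> = K * E * r^2 + G * U^2"
      using m1(1) am a1p by (simp add: K_def G_def field_simps)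
    finally show ?thesis using U0 by (simp add: Ueq E_def r_def)
  qed

  show ?thesis
  proof (intro exI conjI allI impI ballI)
    show "class_KL (\<lambda>r s. sqrt (K + 1) * r * exp (- (\<alpha>/2) * s))"
      using classKL_exp[of "sqrt (K + 1)" "\<alpha>/2"] KG alp by simp
    show "class_K (\<lambda>u. sqrt (G + 1) * u)" using classK_lin[of "sqrt (G+1)"] KG by simp
    fix x :: "real \<Rightarrow> (real^'n1) \<times> (real^'n2)" and J t0 t
    assume h: "is_interval J \<and> t0 \<in> J \<and>
       (\<forall>t\<in>J. (x has_vector_derivative (f1 (x t), f2 (x t) + Shat (x t) *v f1 (x t))) (at t within J))"
      and tJ: "t \<in> J" and tt: "t0 \<le> t"
    have dx: "\<forall>t\<in>J. (x has_vector_derivative F (x t)) (at t within J)" using h by (simp add: F_def)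
    have k: "(norm (x t - (x1s, xs x1s)))^2 \<le> K * exp (- \<alpha> * (t - t0)) * (norm (x t0 - (x1s, xs x1s)))^2
        + G * (SUP s\<in>{t0..t}. norm ((sens f2 (x s) - Shat (x s)) *v f1 (x s)))^2"
      "0 \<le> (SUP s\<in>{t0..t}. norm ((sens f2 (x s) - Shat (x s)) *v f1 (x s)))"
      using key[of J t0 x t] h dx tJ tt by auto
    show "norm (x t - (x1s, xs x1s)) \<le> sqrt (K + 1) * norm (x t0 - (x1s, xs x1s)) * exp (- (\<alpha>/2) * (t - t0))
        + sqrt (G + 1) * (SUP s\<in>{t0..t}. norm ((sens f2 (x s) - Shat (x s)) *v f1 (x s)))"
      by (rule final_arith[OF norm_ge_zero norm_ge_zero k(2) KG k(1)])
  qed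
qed

end
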